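(* In the standing setting, let $((\psi_n,\alpha_n):n\ge1)$ be a sequence of elements of $\mathcal{A}\times\mathcal{B}$, and for each $n$ fix a lifting $\psi_n^\uparrow$ of $\psi_n$. Set $\circ_0=\cdot$ and, recursively for $n\ge1$, $$g\circ_n h=g\circ_{n-1}\psi_n^{\uparrow}(g)\circ_{n-1}h\circ_{n-1}\overline{\psi_n^{\uparrow}(g)}\circ_{n-1}\alpha_n(g,h),$$ where $\overline{z}$ denotes the inverse of $z$ with respect to $\circ_{n-1}$. Let $\xi_n=\sum_{\emptyset\ne S\subseteq\{1,\dots,n\}}\prod_{j\in S}\psi_j\in\mathcal{A}$ (ring operations of $\mathcal{A}$, each product taken in increasing order of the indices, e.g. $\psi_1\psi_2$ means $\psi_1\circ\psi_2$), so that $\xi_1=\psi_1$ and $\xi_n=\xi_{n-1}+\psi_n+\xi_{n-1}\psi_n$; and let $q_n$ be a lifting of $\xi_n$ (for instance $q_n=\sum_{\emptyset\ne S}\prod_{j\in S}\psi_j^\uparrow$ with pointwise products and compositions of maps). Then for every $n\ge1$ each $\circ_n$ is a well-defined group operation on $G$ and there exists $\beta_n\in\mathcal{B}$ such that for all $g,h\in G$ $$g\circ_n h=g\cdot q_n(g)\cdot h\cdot q_n(g)^{-1}\cdot\beta_n(g,h),$$ i.e. $\circ_n=\circ_{\xi_n,\beta_n}$. In particular $(G,\cdot,\circ_n)$ is a bi-skew brace for all $n\ge 1$.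
   Context: Standing setting: $(G,\cdot)$ is a group, $K$ is a subgroup of $G$ contained in the centre $Z(G)$, and $A$ is a subgroup with $K\le A\le G$ and $A/K$ abelian. Let $\mathcal{A}=\{\psi\in\operatorname{End}(G/K):\psi(G/K)\le A/K\}$; it is a ring with $(\psi+\phi)(x)=\psi(x)\phi(x)$ and $(\psi\phi)(x)=\psi(\phi(x))$. A lifting of $\psi\in\mathcal{A}$ is any set map $\psi^{\uparrow}:G\to A$ with $\psi^{\uparrow}(g)K=\psi(gK)$ for all $g\in G$. Let $\mathcal{B}$ be the set of maps $\alpha:G\times G\to K$ that are bilinear, i.e. $\alpha(gh,k)=\alpha(g,k)\alpha(h,k)$ and $\alpha(g,hk)=\alpha(g,h)\alpha(g,k)$, and satisfy $\alpha(k,g)=\alpha(g,k)=1$ for all $k\in K$, $g\in G$. For $(\psi,\alpha)\in\mathcal{A}\times\mathcal{B}$ define $g\circ_{\psi,\alpha}h=g\cdot\psi^{\uparrow}(g)\cdot h\cdot\psi^{\uparrow}(g)^{-1}\cdot\alpha(g,h)$ (independent of the lifting). A skew brace is a triple $(G,\cdot,\circ)$ where $(G,\cdot)$ and $(G,\circ)$ are groups and $g\circ(h\cdot k)=(g\circ h)\cdot g^{-1}\cdot(g\circ k)$ for all $g,h,k$. A bi-skew brace is a triple $(G,\cdot,\circ)$ such that both $(G,\cdot,\circ)$ and $(G,\circ,\cdot)$ are skew braces. *)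

theory Defs
  imports "HOL-Algebra.Algebra"
begin

definition Aend :: "'a monoid \<Rightarrow> 'a set \<Rightarrow> 'a set \<Rightarrow> ('a set \<Rightarrow> 'a set) set" where
  "Aend G K A = {\<psi>. \<psi> \<in> hom (G Mod K) (G Mod K) \<and>
      \<psi> ` carrier (G Mod K) \<subseteq> carrier ((G\<lparr>carrier := A\<rparr>) Mod K)}"

definition Aplus :: "'a monoid \<Rightarrow> 'a set \<Rightarrow> ('a set \<Rightarrow> 'a set) \<Rightarrow> ('a set \<Rightarrow> 'a set) \<Rightarrow> ('a set \<Rightarrow> 'a set)" where
  "Aplus G K \<psi> \<chi> = (\<lambda>Z. \<psi> Z <#>\<^bsub>G\<^esub> \<chi> Z)"

definition Atimes :: "('a set \<Rightarrow> 'a set) \<Rightarrow> ('a set \<Rightarrow> 'a set) \<Rightarrow> ('a set \<Rightarrow> 'a set)" where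
  "Atimes \<psi> \<chi> = (\<lambda>Z. \<psi> (\<chi> Z))"

definition lifting :: "'a monoid \<Rightarrow> 'a set \<Rightarrow> 'a set \<Rightarrow> ('a set \<Rightarrow> 'a set) \<Rightarrow> ('a \<Rightarrow> 'a) \<Rightarrow> bool" where
  "lifting G K A \<psi> f \<longleftrightarrow> (\<forall>g\<in>carrier G. f g \<in> A \<and> K #>\<^bsub>G\<^esub> f g = \<psi> (K #>\<^bsub>G\<^esub> g))"

definition Bbil :: "'a monoid \<Rightarrow> 'a set \<Rightarrow> ('a \<Rightarrow> 'a \<Rightarrow> 'a) set" where
  "Bbil G K = {\<alpha>. (\<forall>g\<in>carrier G. \<forall>h\<in>carrier G. \<alpha> g h \<in> K) \<and>
     (\<forall>g\<in>carrier G. \<forall>h\<in>carrier G. \<forall>k\<in>carrier G.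
         \<alpha> (g \<otimes>\<^bsub>G\<^esub> h) k = \<alpha> g k \<otimes>\<^bsub>G\<^esub> \<alpha> h k \<and>
         \<alpha> g (h \<otimes>\<^bsub>G\<^esub> k) = \<alpha> g h \<otimes>\<^bsub>G\<^esub> \<alpha> g k) \<and>
     (\<forall>k\<in>K. \<forall>g\<in>carrier G. \<alpha> k g = \<one>\<^bsub>G\<^esub> \<and> \<alpha> g k = \<one>\<^bsub>G\<^esub>)}"

definition op_struct :: "'a monoid \<Rightarrow> ('a \<Rightarrow> 'a \<Rightarrow> 'a) \<Rightarrow> 'a monoid" where
  "op_struct G m = G\<lparr>mult := m\<rparr>"

primrec ops :: "'a monoid \<Rightarrow> (nat \<Rightarrow> 'a \<Rightarrow> 'a) \<Rightarrow> (nat \<Rightarrow> 'a \<Rightarrow> 'a \<Rightarrow> 'a) \<Rightarrow> nat \<Rightarrow> 'a \<Rightarrow> 'a \<Rightarrow> 'a" where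
  "ops G p \<alpha> 0 = monoid.mult G"
| "ops G p \<alpha> (Suc n) = (\<lambda>g h.
     let m = ops G p \<alpha> n; z = p (Suc n) g in
       m (m (m (m g z) h) (inv\<^bsub>op_struct G m\<^esub> z)) (\<alpha> (Suc n) g h))"

text \<open>\<xi>_0 = 0 (the empty sum), \<xi>_n = \<xi>_{n-1} + \<psi>_n + \<xi>_{n-1}\<psi>_n; hence
  \<xi>_n is the sum over nonempty S \<subseteq> {1..n} of the ordered products of the \<psi>_j.\<close>
primrec xi :: "'a monoid \<Rightarrow> 'a set \<Rightarrow> (nat \<Rightarrow> 'a set \<Rightarrow> 'a set) \<Rightarrow> nat \<Rightarrow> 'a set \<Rightarrow> 'a set" where
  "xi G K \<psi> 0 = (\<lambda>Z. K)"
| "xi G K \<psi> (Suc n) =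
     Aplus G K (Aplus G K (xi G K \<psi> n) (\<psi> (Suc n))) (Atimes (xi G K \<psi> n) (\<psi> (Suc n)))"

definition skew_brace :: "'a monoid \<Rightarrow> 'a monoid \<Rightarrow> bool" where
  "skew_brace G1 G2 \<longleftrightarrow> group G1 \<and> group G2 \<and> carrier G1 = carrier G2 \<and>
     (\<forall>g\<in>carrier G1. \<forall>h\<in>carrier G1. \<forall>k\<in>carrier G1.
        g \<otimes>\<^bsub>G2\<^esub> (h \<otimes>\<^bsub>G1\<^esub> k) =
          ((g \<otimes>\<^bsub>G2\<^esub> h) \<otimes>\<^bsub>G1\<^esub> inv\<^bsub>G1\<^esub> g) \<otimes>\<^bsub>G1\<^esub> (g \<otimes>\<^bsub>G2\<^esub> k))"

definition bi_skew_brace :: "'a monoid \<Rightarrow> 'a monoid \<Rightarrow> bool" where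
  "bi_skew_brace G1 G2 \<longleftrightarrow> skew_brace G1 G2 \<and> skew_brace G2 G1"

end

theory Submission imports Defs begin

definition goodf :: "'a monoid \<Rightarrow> 'a set \<Rightarrow> 'a set \<Rightarrow> ('a \<Rightarrow> 'a) \<Rightarrow> bool" where
 "goodf G K A f \<longleftrightarrow> (\<forall>g\<in>carrier G. f g \<in> A) \<and>
   (\<forall>g\<in>carrier G. \<forall>h\<in>carrier G. K #>\<^bsub>G\<^esub> f (g \<otimes>\<^bsub>G\<^esub> h) = K #>\<^bsub>G\<^esub> (f g \<otimes>\<^bsub>G\<^esub> f h)) \<and> (\<forall>k\<in>K. f k \<in> K)"

locale bsk = group G for G :: "'a monoid" (structure) +
  fixes K A
  assumes K_sub: "subgroup K G"
  and central: "\<lbrakk>k \<in> K; g \<in> carrier G\<rbrakk> \<Longrightarrow> k \<otimes> g = g \<otimes> k"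
  and A_sub: "subgroup A G" and KA: "K \<subseteq> A"
  and Qcomm: "comm_group ((G\<lparr>carrier := A\<rparr>) Mod K)"
begin

definition "Q = (G\<lparr>carrier := A\<rparr>) Mod K"

lemma Kc[simp]: "k \<in> K \<Longrightarrow> k \<in> carrier G"
  by (rule subgroup.mem_carrier[OF K_sub])
lemma Ac[simp]: "a \<in> A \<Longrightarrow> a \<in> carrier G"
  by (rule subgroup.mem_carrier[OF A_sub])
lemma K_m[simp]: "k \<in> K \<Longrightarrow> l \<in> K \<Longrightarrow> k \<otimes> l \<in> K"
  by (rule subgroup.m_closed[OF K_sub])
lemma K_inv[simp]: "k \<in> K \<Longrightarrow> inv k \<in> K"
  by (rule subgroup.m_inv_closed[OF K_sub])
lemma K_one[simp]: "\<one> \<in> K"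
  by (rule subgroup.one_closed[OF K_sub])
lemma A_m[simp]: "k \<in> A \<Longrightarrow> l \<in> A \<Longrightarrow> k \<otimes> l \<in> A"
  by (rule subgroup.m_closed[OF A_sub])
lemma A_inv[simp]: "k \<in> A \<Longrightarrow> inv k \<in> A"
  by (rule subgroup.m_inv_closed[OF A_sub])
lemma A_one[simp]: "\<one> \<in> A"
  by (rule subgroup.one_closed[OF A_sub])
lemma KA'[simp]: "k \<in> K \<Longrightarrow> k \<in> A" using KA by blast

lemma K_normal: "K \<lhd> G"
  unfolding normal_inv_iff
proof (intro conjI K_sub ballI)
  fix x h assume x: "x \<in> carrier G" and h: "h \<in> K"
  have "x \<otimes> h = h \<otimes> x" using central[OF h x] by simp
  thus "x \<otimes> h \<otimes> inv x \<in> K" using x h by (simp add: m_assoc)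
qed

lemma Qcar: "a \<in> A \<Longrightarrow> K #> a \<in> carrier Q"
  by (auto simp: Q_def FactGroup_def RCOSETS_def r_coset_def)

lemma Qmult: "U \<otimes>\<^bsub>Q\<^esub> V = U <#> V"
  by (simp add: Q_def FactGroup_def set_mult_def)

lemma Qone: "\<one>\<^bsub>Q\<^esub> = K"
  by (simp add: Q_def FactGroup_def)

lemma rsum: "x \<in> carrier G \<Longrightarrow> y \<in> carrier G \<Longrightarrow> K #> (x \<otimes> y) = (K #> x) <#> (K #> y)"
  using normal.rcos_sum[OF K_normal] by simp

lemma comm_mod: "a \<in> A \<Longrightarrow> b \<in> A \<Longrightarrow> K #> (a \<otimes> b) = K #> (b \<otimes> a)"
proof -
  assume a: "a \<in> A" and b: "b \<in> A"
  interpret Q: comm_group Q unfolding Q_def by (rule Qcomm)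
  have "(K #> a) \<otimes>\<^bsub>Q\<^esub> (K #> b) = (K #> b) \<otimes>\<^bsub>Q\<^esub> (K #> a)"
    using Q.m_comm Qcar a b by blast
  thus ?thesis using a b by (simp add: Qmult rsum)
qed

lemma rcos_eq: "x \<in> carrier G \<Longrightarrow> y \<in> carrier G \<Longrightarrow> K #> x = K #> y \<Longrightarrow> \<exists>k\<in>K. x = k \<otimes> y"
proof -
  assume x: "x \<in> carrier G" and y: "y \<in> carrier G" and e: "K #> x = K #> y"
  have "x \<in> K #> y" using rcos_self[OF x K_sub] e by simp
  thus ?thesis by (auto simp: r_coset_def)
qed

lemma rcos_eqI: "y \<in> carrier G \<Longrightarrow> k \<in> K \<Longrightarrow> K #> (k \<otimes> y) = K #> y"
proof -
  assume y: "y \<in> carrier G" and k: "k \<in> K"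
  have "K #> (k \<otimes> y) = (K #> k) <#> (K #> y)" using rsum y k by simp
  also have "K #> k = K" using subgroup.rcos_const[OF K_sub is_group k] .
  also have "K <#> (K #> y) = K #> y"
    using normal.rcosets_mult_eq[OF K_normal] rcosetsI[OF subgroup.subset[OF K_sub] y] by simp
  finally show ?thesis .
qed

lemma rcos_K: "x \<in> carrier G \<Longrightarrow> K #> x = K \<Longrightarrow> x \<in> K"
  using rcos_self[OF _ K_sub, of x] by simp

lemma Kcomm: "k \<in> K \<Longrightarrow> x \<in> carrier G \<Longrightarrow> k \<otimes> x = x \<otimes> k" by (rule central)
lemma Kcomm2: "k \<in> K \<Longrightarrow> x \<in> carrier G \<Longrightarrow> y \<in> carrier G \<Longrightarrow> k \<otimes> (x \<otimes> y) = x \<otimes> (k \<otimes> y)"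
  by (metis Kc central m_assoc)


lemma can1[simp]: "x \<in> carrier G \<Longrightarrow> y \<in> carrier G \<Longrightarrow> x \<otimes> (inv x \<otimes> y) = y"
  by (simp add: m_assoc[symmetric])
lemma can2[simp]: "x \<in> carrier G \<Longrightarrow> y \<in> carrier G \<Longrightarrow> inv x \<otimes> (x \<otimes> y) = y"
  by (simp add: m_assoc[symmetric])

lemma ab1: "\<lbrakk>g \<in> carrier G; u \<in> carrier G; v \<in> carrier G; k1 \<in> K; k2 \<in> K; k3 \<in> K\<rbrakk> \<Longrightarrow>
   g \<otimes> u \<otimes> k1 \<otimes> v \<otimes> (k2 \<otimes> k3) = g \<otimes> (u \<otimes> v \<otimes> k3) \<otimes> (k1 \<otimes> k2)"
proof -
  assume a: "g \<in> carrier G" "u \<in> carrier G" "v \<in> carrier G" "k1 \<in> K" "k2 \<in> K" "k3 \<in> K"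
  show ?thesis using a by (simp add: m_assoc Kcomm[OF a(4)]; simp add: m_assoc Kcomm Kcomm2)
qed
lemma ab_sb1: "\<lbrakk>g \<in> carrier G; u \<in> carrier G; v \<in> carrier G; k1 \<in> K; k2 \<in> K\<rbrakk> \<Longrightarrow>
   g \<otimes> (u \<otimes> v) \<otimes> (k1 \<otimes> k2) = g \<otimes> u \<otimes> k1 \<otimes> inv g \<otimes> (g \<otimes> v \<otimes> k2)"
proof -
  assume a: "g \<in> carrier G" "u \<in> carrier G" "v \<in> carrier G" "k1 \<in> K" "k2 \<in> K"
  show ?thesis using a by (simp add: m_assoc Kcomm[OF a(4)]; simp add: m_assoc Kcomm Kcomm2)
qed
lemma ab_sb2: "\<lbrakk>g \<in> carrier G; h \<in> carrier G; w \<in> carrier G; v \<in> carrier G; z \<in> K; k2 \<in> K\<rbrakk> \<Longrightarrow>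
   g \<otimes> h \<otimes> inv w \<otimes> inv z \<otimes> (w \<otimes> v) \<otimes> (z \<otimes> k2) = g \<otimes> (h \<otimes> v \<otimes> k2)"
proof -
  assume a: "g \<in> carrier G" "h \<in> carrier G" "w \<in> carrier G" "v \<in> carrier G" "z \<in> K" "k2 \<in> K"
  have iz: "inv z \<in> K" using a by simp
  show ?thesis using a by (simp add: m_assoc Kcomm[OF iz]; simp add: m_assoc Kcomm[OF a(5)])
qed
lemma kcan: "k1 \<in> K \<Longrightarrow> k2 \<in> K \<Longrightarrow> k1 \<otimes> k2 \<otimes> inv k1 = k2"
proof -
  assume a: "k1 \<in> K" "k2 \<in> K"
  have "k1 \<otimes> k2 = k2 \<otimes> k1" using a Kcomm by simp
  thus ?thesis using a by (simp add: m_assoc)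
qed
lemma kcan2: "k1 \<in> K \<Longrightarrow> k2 \<in> K \<Longrightarrow> k1 \<otimes> inv (k1 \<otimes> k2) = inv k2"
proof -
  assume a: "k1 \<in> K" "k2 \<in> K"
  have "inv k2 \<otimes> inv k1 = inv k1 \<otimes> inv k2" using a Kcomm by simp
  thus ?thesis using a by (simp add: inv_mult_group)
qed

definition cj where "cj a x = a \<otimes> x \<otimes> inv a"
definition circ :: "('a \<Rightarrow> 'a) \<Rightarrow> ('a \<Rightarrow> 'a \<Rightarrow> 'a) \<Rightarrow> 'a \<Rightarrow> 'a \<Rightarrow> 'a" where
  "circ f \<beta> g h = g \<otimes> f g \<otimes> h \<otimes> inv (f g) \<otimes> \<beta> g h"

lemma cj_closed[simp]: "a \<in> carrier G \<Longrightarrow> x \<in> carrier G \<Longrightarrow> cj a x \<in> carrier G"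
  by (simp add: cj_def)
lemma cj_mult: "a \<in> carrier G \<Longrightarrow> x \<in> carrier G \<Longrightarrow> y \<in> carrier G \<Longrightarrow> cj a (x \<otimes> y) = cj a x \<otimes> cj a y"
  by (simp add: cj_def m_assoc)
lemma cj_inv: "a \<in> carrier G \<Longrightarrow> x \<in> carrier G \<Longrightarrow> cj a (inv x) = inv (cj a x)"
  by (simp add: cj_def inv_mult_group m_assoc)
lemma cj_K: "a \<in> carrier G \<Longrightarrow> k \<in> K \<Longrightarrow> cj a k = k"
  by (simp add: cj_def central[of k a, symmetric] m_assoc)
lemma cj_comp: "a \<in> carrier G \<Longrightarrow> b \<in> carrier G \<Longrightarrow> x \<in> carrier G \<Longrightarrow> cj (a \<otimes> b) x = cj a (cj b x)"
  by (simp add: cj_def m_assoc inv_mult_group)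
lemma cj_Kl: "k \<in> K \<Longrightarrow> x \<in> carrier G \<Longrightarrow> cj k x = x"
  by (simp add: cj_def central[of k x] m_assoc)
lemma cj_cong: "a \<in> carrier G \<Longrightarrow> b \<in> carrier G \<Longrightarrow> x \<in> carrier G \<Longrightarrow> K #> a = K #> b \<Longrightarrow> cj a x = cj b x"
proof -
  assume a: "a \<in> carrier G" "b \<in> carrier G" "x \<in> carrier G" "K #> a = K #> b"
  obtain k where k: "k \<in> K" "a = k \<otimes> b" using rcos_eq[OF a(1,2,4)] by blast
  show ?thesis using k a by (simp add: cj_comp cj_Kl)
qed
lemma cj_one[simp]: "x \<in> carrier G \<Longrightarrow> cj \<one> x = x"
  by (simp add: cj_def)
lemma cj_ic1[simp]: "a \<in> carrier G \<Longrightarrow> x \<in> carrier G \<Longrightarrow> cj (inv a) (cj a x) = x"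
  by (simp add: cj_def m_assoc)
lemma cj_ic2[simp]: "a \<in> carrier G \<Longrightarrow> x \<in> carrier G \<Longrightarrow> cj a (cj (inv a) x) = x"
  by (simp add: cj_def m_assoc)
lemma cj_A: "a \<in> A \<Longrightarrow> b \<in> A \<Longrightarrow> x \<in> carrier G \<Longrightarrow> cj a (cj b x) = cj b (cj a x)"
proof -
  assume a: "a \<in> A" "b \<in> A" "x \<in> carrier G"
  have "cj (a \<otimes> b) x = cj (b \<otimes> a) x" using a comm_mod by (intro cj_cong) simp_all
  thus ?thesis using a by (simp add: cj_comp)
qed


lemma gA[simp]: "goodf G K A f \<Longrightarrow> g \<in> carrier G \<Longrightarrow> f g \<in> A" unfolding goodf_def by blast
lemma gK[simp]: "goodf G K A f \<Longrightarrow> k \<in> K \<Longrightarrow> f k \<in> K" unfolding goodf_def by blast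
lemma gmod: "goodf G K A f \<Longrightarrow> g \<in> carrier G \<Longrightarrow> h \<in> carrier G \<Longrightarrow> K #> f (g \<otimes> h) = K #> (f g \<otimes> f h)"
  unfolding goodf_def by blast
lemma gPhi_mult: "goodf G K A f \<Longrightarrow> g \<in> carrier G \<Longrightarrow> h \<in> carrier G \<Longrightarrow> K #> f (g \<otimes> h) = (K #> f g) \<otimes>\<^bsub>Q\<^esub> (K #> f h)"
  by (simp add: gmod rsum Qmult)
lemma gPhi_K: "goodf G K A f \<Longrightarrow> k \<in> K \<Longrightarrow> K #> f k = \<one>\<^bsub>Q\<^esub>"
  by (simp add: Qone subgroup.rcos_const[OF K_sub is_group])
lemma PhiA_mult: "a \<in> A \<Longrightarrow> b \<in> A \<Longrightarrow> K #> (a \<otimes> b) = (K #> a) \<otimes>\<^bsub>Q\<^esub> (K #> b)"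
  by (simp add: rsum Qmult)

lemma circ_cj_gen: "g \<in> carrier G \<Longrightarrow> h \<in> carrier G \<Longrightarrow> ff g \<in> carrier G \<Longrightarrow> bb g h \<in> carrier G \<Longrightarrow>
   circ ff bb g h = g \<otimes> cj (ff g) h \<otimes> bb g h"
  by (simp add: circ_def cj_def m_assoc)

definition cm where "cm x y = x \<otimes> y \<otimes> inv x \<otimes> inv y"

lemma cm_K[simp]: "x \<in> A \<Longrightarrow> y \<in> A \<Longrightarrow> cm x y \<in> K"
proof -
  assume a: "x \<in> A" "y \<in> A"
  have "K #> (x \<otimes> y) = K #> (y \<otimes> x)" using comm_mod a by simp
  hence "x \<otimes> y \<in> K #> (y \<otimes> x)" using rcos_self[OF _ K_sub, of "x \<otimes> y"] a by simp
  hence "(x \<otimes> y) \<otimes> inv (y \<otimes> x) \<in> K" using subgroup.rcos_module_imp[OF K_sub is_group] a by simp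
  thus ?thesis using a by (simp add: cm_def inv_mult_group m_assoc)
qed
lemma cm_c[simp]: "x \<in> carrier G \<Longrightarrow> y \<in> carrier G \<Longrightarrow> cm x y \<in> carrier G" by (simp add: cm_def)
lemma cm_zl: "k \<in> K \<Longrightarrow> y \<in> carrier G \<Longrightarrow> cm k y = \<one>"
  by (simp add: cm_def central[of k y] m_assoc)
lemma cm_zr: "k \<in> K \<Longrightarrow> x \<in> carrier G \<Longrightarrow> cm x k = \<one>"
proof -
  assume a: "k \<in> K" "x \<in> carrier G"
  have "x \<otimes> k \<otimes> inv x = k" using cj_K[of x k] a by (simp add: cj_def)
  thus ?thesis using a by (simp add: cm_def)
qed
lemma cm_l: "x \<in> A \<Longrightarrow> x' \<in> A \<Longrightarrow> y \<in> A \<Longrightarrow> cm (x \<otimes> x') y = cm x y \<otimes> cm x' y"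
proof -
  assume a: "x \<in> A" "x' \<in> A" "y \<in> A"
  let ?c = "cm x' y"
  have c: "?c \<in> K" using a by simp
  have e: "x' \<otimes> y \<otimes> inv x' = ?c \<otimes> y" using a by (simp add: cm_def m_assoc)
  have 1: "x \<otimes> (?c \<otimes> y) = ?c \<otimes> (x \<otimes> y)" using Kcomm2[of ?c x y] a c by simp
  have "cm (x \<otimes> x') y = x \<otimes> (x' \<otimes> y \<otimes> inv x') \<otimes> inv x \<otimes> inv y"
    using a by (simp add: cm_def inv_mult_group m_assoc)
  also have "\<dots> = x \<otimes> (?c \<otimes> y) \<otimes> inv x \<otimes> inv y" by (simp only: e)
  also have "\<dots> = ?c \<otimes> (x \<otimes> y \<otimes> inv x \<otimes> inv y)" using a c by (simp add: 1 m_assoc del: cm_K)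
  also have "\<dots> = ?c \<otimes> cm x y" by (simp add: cm_def)
  also have "\<dots> = cm x y \<otimes> ?c" using a c Kcomm by simp
  finally show ?thesis .
qed
lemma cm_r: "x \<in> A \<Longrightarrow> y \<in> A \<Longrightarrow> y' \<in> A \<Longrightarrow> cm x (y \<otimes> y') = cm x y \<otimes> cm x y'"
proof -
  assume a: "x \<in> A" "y \<in> A" "y' \<in> A"
  let ?c = "cm x y"
  have c: "?c \<in> K" using a by simp
  have e: "x \<otimes> y = ?c \<otimes> y \<otimes> x" using a by (simp add: cm_def m_assoc)
  have "cm x (y \<otimes> y') = (x \<otimes> y) \<otimes> (y' \<otimes> inv x \<otimes> inv y') \<otimes> inv y"
    using a by (simp add: cm_def inv_mult_group m_assoc)
  also have "\<dots> = (?c \<otimes> y \<otimes> x) \<otimes> (y' \<otimes> inv x \<otimes> inv y') \<otimes> inv y" by (simp only: e)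
  also have "\<dots> = ?c \<otimes> (y \<otimes> cm x y' \<otimes> inv y)" using a c by (simp add: m_assoc cm_def del: cm_K)
  also have "y \<otimes> cm x y' \<otimes> inv y = cm x y'" using cj_K[of y "cm x y'"] a by (simp add: cj_def)
  finally show ?thesis .
qed

definition rN where "rN f p = (\<lambda>g. f g \<otimes> p g \<otimes> f (p g))"
definition betaN where "betaN f \<beta> p \<alpha> = (\<lambda>g h. \<beta> g h \<otimes> \<alpha> g h \<otimes> \<beta> (p g) h \<otimes> inv (\<beta> h (p g)) \<otimes> cm (p g) (f h))"

lemma rN_good: assumes f: "goodf G K A f" and p: "goodf G K A p" shows "goodf G K A (rN f p)"
  unfolding goodf_def
proof (intro conjI ballI)
  interpret Q: comm_group Q unfolding Q_def by (rule Qcomm)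
  fix g h assume a: "g \<in> carrier G" "h \<in> carrier G"
  obtain k0 where k0: "k0 \<in> K" "p (g \<otimes> h) = k0 \<otimes> (p g \<otimes> p h)"
    using rcos_eq[of "p (g \<otimes> h)" "p g \<otimes> p h"] gmod[OF p] a f p by auto
  have fp: "K #> f (p (g \<otimes> h)) = (K #> f (p g)) \<otimes>\<^bsub>Q\<^esub> (K #> f (p h))"
    using a k0 f p by (simp add: gPhi_mult[OF f] gPhi_K[OF f] Qcar)
  show "K #> rN f p (g \<otimes> h) = K #> (rN f p g \<otimes> rN f p h)"
    using a f p by (simp add: rN_def PhiA_mult gPhi_mult[OF f] gPhi_mult[OF p] fp Qcar Q.m_ac del: r_coset_def)
qed (use f p in \<open>simp_all add: rN_def\<close>)

lemma ab5: "k1 \<in> K \<Longrightarrow> k2 \<in> K \<Longrightarrow> k3 \<in> K \<Longrightarrow> k4 \<in> K \<Longrightarrow> k5 \<in> K \<Longrightarrow>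
   k1 \<otimes> (k2 \<otimes> k3 \<otimes> k4) \<otimes> k5 = k5 \<otimes> k2 \<otimes> k4 \<otimes> k3 \<otimes> k1"
  by (simp add: m_assoc Kcomm Kcomm2)

lemma good_of_lift: assumes ps: "\<psi>' \<in> Aend G K A" and l: "lifting G K A \<psi>' p" shows "goodf G K A p"
proof -
  interpret GM: group "G Mod K" by (rule normal.factorgroup_is_group[OF K_normal])
  have hom: "\<psi>' \<in> hom (G Mod K) (G Mod K)" using ps by (simp add: Aend_def)
  have gh: "group_hom (G Mod K) (G Mod K) \<psi>'"
    by (simp add: group_hom_def group_hom_axioms_def GM.is_group hom)
  have lp: "\<And>g. g \<in> carrier G \<Longrightarrow> p g \<in> A \<and> K #> p g = \<psi>' (K #> g)" using l unfolding lifting_def by blast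
  have car: "\<And>g. g \<in> carrier G \<Longrightarrow> K #> g \<in> carrier (G Mod K)"
    by (simp add: FactGroup_def rcosetsI subgroup.subset[OF K_sub])
  show ?thesis unfolding goodf_def
  proof (intro conjI ballI)
    fix g h assume a: "g \<in> carrier G" "h \<in> carrier G"
    have "K #> p (g \<otimes> h) = \<psi>' ((K #> g) \<otimes>\<^bsub>G Mod K\<^esub> (K #> h))" using lp a by (simp add: rsum)
    also have "\<dots> = \<psi>' (K #> g) \<otimes>\<^bsub>G Mod K\<^esub> \<psi>' (K #> h)" using hom_mult[OF hom car car] a by simp
    also have "\<dots> = K #> (p g \<otimes> p h)" using lp a by (simp add: rsum)
    finally show "K #> p (g \<otimes> h) = K #> (p g \<otimes> p h)" .
  next
    fix k assume k: "k \<in> K"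
    have kc: "k \<in> carrier G" using k by simp
    have 1: "K #> p k = \<psi>' (K #> k)" and pk: "p k \<in> A" using lp[OF kc] by blast+
    have 2: "K #> k = K" using subgroup.rcos_const[OF K_sub is_group k] .
    have 3: "\<psi>' K = K" using group_hom.hom_one[OF gh] by simp
    have "K #> p k = K" using 1 2 3 by simp
    then show "p k \<in> K" using rcos_K[of "p k"] pk by simp
  qed (use lp in simp)
qed

lemma rN_lift: assumes lf: "lifting G K A (xi G K \<psi> n) f" and lp: "lifting G K A (\<psi> (Suc n)) p"
  shows "lifting G K A (xi G K \<psi> (Suc n)) (rN f p)"
  unfolding lifting_def
proof (intro ballI conjI)
  fix g assume g: "g \<in> carrier G"
  have pA: "p g \<in> A" and pe: "K #> p g = \<psi> (Suc n) (K #> g)" using lp g unfolding lifting_def by blast+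
  have fA: "\<And>x. x \<in> carrier G \<Longrightarrow> f x \<in> A \<and> K #> f x = xi G K \<psi> n (K #> x)" using lf unfolding lifting_def by blast
  show "rN f p g \<in> A" using fA g pA by (simp add: rN_def)
  show "K #> rN f p g = xi G K \<psi> (Suc n) (K #> g)"
    using fA[of g] fA[of "p g"] g pA pe by (simp add: rN_def Aplus_def Atimes_def rsum)
qed

context fixes \<beta> assumes bil: "\<beta> \<in> Bbil G K"
begin
lemma bK[simp]: "g \<in> carrier G \<Longrightarrow> h \<in> carrier G \<Longrightarrow> \<beta> g h \<in> K"
  using bil unfolding Bbil_def by blast
lemma bc[simp]: "g \<in> carrier G \<Longrightarrow> h \<in> carrier G \<Longrightarrow> \<beta> g h \<in> carrier G"
  by simp
lemma bl: "g \<in> carrier G \<Longrightarrow> h \<in> carrier G \<Longrightarrow> x \<in> carrier G \<Longrightarrow> \<beta> (g \<otimes> h) x = \<beta> g x \<otimes> \<beta> h x"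
  using bil unfolding Bbil_def by blast
lemma br: "g \<in> carrier G \<Longrightarrow> h \<in> carrier G \<Longrightarrow> x \<in> carrier G \<Longrightarrow> \<beta> x (g \<otimes> h) = \<beta> x g \<otimes> \<beta> x h"
  using bil unfolding Bbil_def by blast
lemma bzl[simp]: "k \<in> K \<Longrightarrow> x \<in> carrier G \<Longrightarrow> \<beta> k x = \<one>"
  using bil unfolding Bbil_def by blast
lemma bzr[simp]: "k \<in> K \<Longrightarrow> x \<in> carrier G \<Longrightarrow> \<beta> x k = \<one>"
  using bil unfolding Bbil_def by blast
lemma binvl: "g \<in> carrier G \<Longrightarrow> x \<in> carrier G \<Longrightarrow> \<beta> (inv g) x = inv (\<beta> g x)"
proof -
  assume a: "g \<in> carrier G" "x \<in> carrier G"
  have "\<beta> g x \<otimes> \<beta> (inv g) x = \<one>" using a bl[of g "inv g" x] by simp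
  hence "\<beta> (inv g) x \<otimes> \<beta> g x = \<one>" using a inv_comm by simp
  thus ?thesis using a inv_equality by simp
qed
lemma binvr: "g \<in> carrier G \<Longrightarrow> x \<in> carrier G \<Longrightarrow> \<beta> x (inv g) = inv (\<beta> x g)"
proof -
  assume a: "g \<in> carrier G" "x \<in> carrier G"
  have "\<beta> x g \<otimes> \<beta> x (inv g) = \<one>" using a br[of g "inv g" x] by simp
  hence "\<beta> x (inv g) \<otimes> \<beta> x g = \<one>" using a inv_comm by simp
  thus ?thesis using a inv_equality by simp
qed
lemma bcjl: "a \<in> carrier G \<Longrightarrow> g \<in> carrier G \<Longrightarrow> x \<in> carrier G \<Longrightarrow> \<beta> (cj a g) x = \<beta> g x"
  by (simp add: cj_def bl binvl kcan)
lemma bcjr: "a \<in> carrier G \<Longrightarrow> g \<in> carrier G \<Longrightarrow> x \<in> carrier G \<Longrightarrow> \<beta> x (cj a g) = \<beta> x g"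
  by (simp add: cj_def br binvr kcan)
end

end

definition (in bsk) gbar :: "('a \<Rightarrow> 'a) \<Rightarrow> ('a \<Rightarrow> 'a \<Rightarrow> 'a) \<Rightarrow> 'a \<Rightarrow> 'a" where
  "gbar f \<beta> g = cj (inv (f g)) (inv g) \<otimes> \<beta> g g"

locale bskc = bsk +
  fixes f \<beta>
  assumes good: "goodf G K A f" and bil: "\<beta> \<in> Bbil G K"
begin

abbreviation "cc \<equiv> circ f \<beta>"

lemma fA[simp]: "g \<in> carrier G \<Longrightarrow> f g \<in> A" using good unfolding goodf_def by blast
lemma fc[simp]: "g \<in> carrier G \<Longrightarrow> f g \<in> carrier G" by simp
lemma fK[simp]: "k \<in> K \<Longrightarrow> f k \<in> K" using good unfolding goodf_def by blast
lemma fmod: "g \<in> carrier G \<Longrightarrow> h \<in> carrier G \<Longrightarrow> K #> f (g \<otimes> h) = K #> (f g \<otimes> f h)"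
  using good unfolding goodf_def by blast

lemma bK'[simp]: "g \<in> carrier G \<Longrightarrow> h \<in> carrier G \<Longrightarrow> \<beta> g h \<in> K" using bK[OF bil] .
lemma bc'[simp]: "g \<in> carrier G \<Longrightarrow> h \<in> carrier G \<Longrightarrow> \<beta> g h \<in> carrier G" by simp
lemma bzl'[simp]: "k \<in> K \<Longrightarrow> x \<in> carrier G \<Longrightarrow> \<beta> k x = \<one>" using bzl[OF bil] .
lemma bzr'[simp]: "k \<in> K \<Longrightarrow> x \<in> carrier G \<Longrightarrow> \<beta> x k = \<one>" using bzr[OF bil] .
lemmas bl' = bl[OF bil] and br' = br[OF bil] and binvl' = binvl[OF bil] and binvr' = binvr[OF bil]
  and bcjl' = bcjl[OF bil] and bcjr' = bcjr[OF bil]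

lemma Phi_car[simp]: "g \<in> carrier G \<Longrightarrow> K #> f g \<in> carrier Q" by (simp add: Qcar)
lemma Phi_mult: "g \<in> carrier G \<Longrightarrow> h \<in> carrier G \<Longrightarrow> K #> f (g \<otimes> h) = (K #> f g) \<otimes>\<^bsub>Q\<^esub> (K #> f h)"
  by (simp add: fmod rsum Qmult)
lemma Phi_K: "k \<in> K \<Longrightarrow> K #> f k = \<one>\<^bsub>Q\<^esub>"
  by (simp add: Qone subgroup.rcos_const[OF K_sub is_group])
lemma Phi_inv: "g \<in> carrier G \<Longrightarrow> (K #> f g) \<otimes>\<^bsub>Q\<^esub> (K #> f (inv g)) = \<one>\<^bsub>Q\<^esub>"
  by (simp add: Phi_mult[symmetric] Phi_K)
lemma Phi_AB: "a \<in> A \<Longrightarrow> b \<in> A \<Longrightarrow> K #> (a \<otimes> b) = (K #> a) \<otimes>\<^bsub>Q\<^esub> (K #> b)"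
  by (simp add: rsum Qmult)

lemma circ_cj: "g \<in> carrier G \<Longrightarrow> h \<in> carrier G \<Longrightarrow> cc g h = g \<otimes> cj (f g) h \<otimes> \<beta> g h"
  by (simp add: circ_def cj_def m_assoc)
lemma circ_closed[simp]: "g \<in> carrier G \<Longrightarrow> h \<in> carrier G \<Longrightarrow> cc g h \<in> carrier G"
  by (simp add: circ_def)

lemma circ_mod: "g \<in> carrier G \<Longrightarrow> h \<in> carrier G \<Longrightarrow> K #> f (cc g h) = K #> (f g \<otimes> f h)"
proof -
  assume a: "g \<in> carrier G" "h \<in> carrier G"
  interpret Q: comm_group Q unfolding Q_def by (rule Qcomm)
  let ?P = "\<lambda>x. K #> f x"
  have "?P (cc g h) = ?P g \<otimes>\<^bsub>Q\<^esub> ?P (f g) \<otimes>\<^bsub>Q\<^esub> ?P h \<otimes>\<^bsub>Q\<^esub> ?P (inv (f g)) \<otimes>\<^bsub>Q\<^esub> ?P (\<beta> g h)"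
    using a by (simp add: circ_def Phi_mult)
  also have "\<dots> = ?P g \<otimes>\<^bsub>Q\<^esub> ?P h \<otimes>\<^bsub>Q\<^esub> (?P (f g) \<otimes>\<^bsub>Q\<^esub> ?P (inv (f g))) \<otimes>\<^bsub>Q\<^esub> ?P (\<beta> g h)"
    using a by (simp add: Q.m_ac)
  also have "\<dots> = ?P g \<otimes>\<^bsub>Q\<^esub> ?P h"
    using a by (simp add: Phi_inv Phi_K)
  finally show ?thesis using a by (simp add: Phi_AB)
qed

lemma b_circ_l: "g \<in> carrier G \<Longrightarrow> h \<in> carrier G \<Longrightarrow> x \<in> carrier G \<Longrightarrow> \<beta> (cc g h) x = \<beta> g x \<otimes> \<beta> h x"
  by (simp add: circ_cj bl' bcjl')
lemma b_circ_r: "g \<in> carrier G \<Longrightarrow> h \<in> carrier G \<Longrightarrow> x \<in> carrier G \<Longrightarrow> \<beta> x (cc g h) = \<beta> x g \<otimes> \<beta> x h"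
  by (simp add: circ_cj br' bcjr')

lemma circ_assoc: "g \<in> carrier G \<Longrightarrow> h \<in> carrier G \<Longrightarrow> x \<in> carrier G \<Longrightarrow> cc (cc g h) x = cc g (cc h x)"
proof -
  assume a: "g \<in> carrier G" "h \<in> carrier G" "x \<in> carrier G"
  have m: "cj (f (cc g h)) x = cj (f g) (cj (f h) x)"
    using a cj_cong[of "f (cc g h)" "f g \<otimes> f h" x] circ_mod cj_comp by simp
  have "cc (cc g h) x = (g \<otimes> cj (f g) h \<otimes> \<beta> g h) \<otimes> cj (f g) (cj (f h) x) \<otimes> (\<beta> g x \<otimes> \<beta> h x)"
    using a by (simp add: circ_cj[of "cc g h" x] m b_circ_l) (simp add: circ_cj)
  also have "\<dots> = g \<otimes> (cj (f g) h \<otimes> cj (f g) (cj (f h) x) \<otimes> \<beta> h x) \<otimes> (\<beta> g h \<otimes> \<beta> g x)"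
    using a by (simp add: ab1)
  also have "\<dots> = cc g (cc h x)"
    using a by (simp add: circ_cj[of g "cc h x"] b_circ_r) (simp add: circ_cj cj_mult cj_K)
  finally show ?thesis .
qed

lemma circ_lone: "h \<in> carrier G \<Longrightarrow> cc \<one> h = h"
  by (simp add: circ_cj cj_Kl)
lemma circ_rone: "g \<in> carrier G \<Longrightarrow> cc g \<one> = g"
  by (simp add: circ_cj cj_def)
lemma gbar_closed[simp]: "g \<in> carrier G \<Longrightarrow> gbar f \<beta> g \<in> carrier G"
  by (simp add: gbar_def)
lemma circ_rinv: "g \<in> carrier G \<Longrightarrow> cc g (gbar f \<beta> g) = \<one>"
  by (simp add: circ_cj gbar_def cj_mult cj_K br' bcjr' binvr' m_assoc)
lemma circ_linv: "g \<in> carrier G \<Longrightarrow> cc (gbar f \<beta> g) g = \<one>"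
proof -
  assume x: "g \<in> carrier G"
  let ?y = "gbar f \<beta> g" let ?z = "gbar f \<beta> ?y"
  have "g = cc g (cc ?y ?z)" using x by (simp add: circ_rinv circ_rone)
  also have "\<dots> = cc (cc g ?y) ?z" using x by (simp only: circ_assoc gbar_closed)
  also have "\<dots> = ?z" using x by (simp add: circ_rinv circ_lone)
  finally have gz: "g = ?z" .
  have "cc ?y g = cc ?y ?z" by (rule arg_cong[where f="cc ?y", OF gz])
  also have "\<dots> = \<one>" using x by (simp add: circ_rinv)
  finally show ?thesis .
qed


lemma opg: assumes m: "\<And>x y. x \<in> carrier G \<Longrightarrow> y \<in> carrier G \<Longrightarrow> m x y = cc x y"
  shows "group (op_struct G m)"
  unfolding op_struct_def
proof (rule groupI)
  fix x y z assume "x \<in> carrier (G\<lparr>mult := m\<rparr>)" "y \<in> carrier (G\<lparr>mult := m\<rparr>)" "z \<in> carrier (G\<lparr>mult := m\<rparr>)"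
  thus "x \<otimes>\<^bsub>G\<lparr>mult := m\<rparr>\<^esub> y \<otimes>\<^bsub>G\<lparr>mult := m\<rparr>\<^esub> z = x \<otimes>\<^bsub>G\<lparr>mult := m\<rparr>\<^esub> (y \<otimes>\<^bsub>G\<lparr>mult := m\<rparr>\<^esub> z)"
    by (simp add: m circ_assoc)
next
  fix x assume x: "x \<in> carrier (G\<lparr>mult := m\<rparr>)"
  show "\<exists>y\<in>carrier (G\<lparr>mult := m\<rparr>). y \<otimes>\<^bsub>G\<lparr>mult := m\<rparr>\<^esub> x = \<one>\<^bsub>G\<lparr>mult := m\<rparr>\<^esub>"
    using x by (intro bexI[of _ "gbar f \<beta> x"]) (simp_all add: m circ_linv)
qed (simp_all add: m circ_lone)

lemma opinv: assumes m: "\<And>x y. x \<in> carrier G \<Longrightarrow> y \<in> carrier G \<Longrightarrow> m x y = cc x y"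
  and x: "x \<in> carrier G"
  shows "inv\<^bsub>op_struct G m\<^esub> x = gbar f \<beta> x"
  using group.inv_equality[OF opg[OF m]] x by (simp add: op_struct_def m circ_linv)

lemma cjf: "g \<in> carrier G \<Longrightarrow> h \<in> carrier G \<Longrightarrow> y \<in> carrier G \<Longrightarrow> cj (f (g \<otimes> h)) y = cj (f h) (cj (f g) y)"
  using cj_cong[of "f (g \<otimes> h)" "f g \<otimes> f h" y] fmod cj_comp cj_A by simp

lemma sb1core: "g \<in> carrier G \<Longrightarrow> h \<in> carrier G \<Longrightarrow> k \<in> carrier G \<Longrightarrow> cc g (h \<otimes> k) = cc g h \<otimes> inv g \<otimes> cc g k"
proof -
  assume a: "g \<in> carrier G" "h \<in> carrier G" "k \<in> carrier G"
  have "cc g (h \<otimes> k) = g \<otimes> (cj (f g) h \<otimes> cj (f g) k) \<otimes> (\<beta> g h \<otimes> \<beta> g k)"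
    using a by (simp add: circ_cj cj_mult br')
  also have "\<dots> = g \<otimes> cj (f g) h \<otimes> \<beta> g h \<otimes> inv g \<otimes> (g \<otimes> cj (f g) k \<otimes> \<beta> g k)"
    using a by (intro ab_sb1) simp_all
  also have "\<dots> = cc g h \<otimes> inv g \<otimes> cc g k" using a by (simp add: circ_cj)
  finally show ?thesis .
qed

lemma ab3: "x \<in> carrier G \<Longrightarrow> y \<in> carrier G \<Longrightarrow> k1 \<in> K \<Longrightarrow> k2 \<in> K \<Longrightarrow> x \<otimes> (y \<otimes> k1) \<otimes> (inv k1 \<otimes> k2) = x \<otimes> y \<otimes> k2"
  by (simp add: m_assoc)

lemma Phi_u: "g \<in> carrier G \<Longrightarrow> h \<in> carrier G \<Longrightarrow> z \<in> K \<Longrightarrow> K #> f (g \<otimes> h \<otimes> inv (cj (f h) g) \<otimes> z) = K #> f h"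
proof -
  assume a: "g \<in> carrier G" "h \<in> carrier G" "z \<in> K"
  interpret Q: comm_group Q unfolding Q_def by (rule Qcomm)
  let ?P = "\<lambda>x. K #> f x"
  have i: "inv (cj (f h) g) = f h \<otimes> inv g \<otimes> inv (f h)"
    using a by (simp add: cj_def inv_mult_group m_assoc)
  have "?P (g \<otimes> h \<otimes> inv (cj (f h) g) \<otimes> z) = ?P g \<otimes>\<^bsub>Q\<^esub> ?P h \<otimes>\<^bsub>Q\<^esub> (?P (f h) \<otimes>\<^bsub>Q\<^esub> ?P (inv g) \<otimes>\<^bsub>Q\<^esub> ?P (inv (f h))) \<otimes>\<^bsub>Q\<^esub> ?P z"
    using a by (simp add: i Phi_mult)
  also have "\<dots> = ?P h \<otimes>\<^bsub>Q\<^esub> (?P g \<otimes>\<^bsub>Q\<^esub> ?P (inv g)) \<otimes>\<^bsub>Q\<^esub> (?P (f h) \<otimes>\<^bsub>Q\<^esub> ?P (inv (f h))) \<otimes>\<^bsub>Q\<^esub> ?P z"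
    using a by (simp add: Q.m_ac)
  also have "\<dots> = ?P h" using a by (simp add: Phi_inv Phi_K)
  finally show ?thesis .
qed

lemma bu: "g \<in> carrier G \<Longrightarrow> h \<in> carrier G \<Longrightarrow> z \<in> K \<Longrightarrow> x \<in> carrier G \<Longrightarrow> \<beta> (g \<otimes> h \<otimes> inv (cj (f h) g) \<otimes> z) x = \<beta> h x"
  by (simp add: bl' binvl' bcjl' kcan)

lemma sb2core: "g \<in> carrier G \<Longrightarrow> h \<in> carrier G \<Longrightarrow> k \<in> carrier G \<Longrightarrow> g \<otimes> cc h k = cc (cc (g \<otimes> h) (gbar f \<beta> g)) (g \<otimes> k)"
proof -
  assume a: "g \<in> carrier G" "h \<in> carrier G" "k \<in> carrier G"
  let ?b = "f h"
  have e1: "cc (g \<otimes> h) (gbar f \<beta> g) = g \<otimes> h \<otimes> (cj ?b (inv g) \<otimes> \<beta> g g) \<otimes> \<beta> (g \<otimes> h) (inv g)"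
    using a by (simp add: circ_cj[of "g \<otimes> h"] cjf gbar_def cj_mult cj_K br' bcjr')
  also have "\<beta> (g \<otimes> h) (inv g) = inv (\<beta> g g) \<otimes> inv (\<beta> h g)"
    using a by (simp add: binvr' bl' inv_mult_group Kcomm)
  also have "g \<otimes> h \<otimes> (cj ?b (inv g) \<otimes> \<beta> g g) \<otimes> (inv (\<beta> g g) \<otimes> inv (\<beta> h g)) = g \<otimes> h \<otimes> inv (cj ?b g) \<otimes> inv (\<beta> h g)"
    using a by (simp add: ab3 cj_inv)
  finally have u: "cc (g \<otimes> h) (gbar f \<beta> g) = g \<otimes> h \<otimes> inv (cj ?b g) \<otimes> inv (\<beta> h g)" .
  let ?u = "g \<otimes> h \<otimes> inv (cj ?b g) \<otimes> inv (\<beta> h g)"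
  have cu: "\<And>y. y \<in> carrier G \<Longrightarrow> cj (f ?u) y = cj ?b y"
    using a by (intro cj_cong) (simp_all add: Phi_u)
  have "cc ?u (g \<otimes> k) = ?u \<otimes> (cj ?b g \<otimes> cj ?b k) \<otimes> (\<beta> h g \<otimes> \<beta> h k)"
    using a by (simp add: circ_cj[of ?u] cu cj_mult br' bu del: circ_closed)
  also have "\<dots> = g \<otimes> (h \<otimes> cj ?b k \<otimes> \<beta> h k)"
    using a by (intro ab_sb2) simp_all
  also have "\<dots> = g \<otimes> cc h k" using a by (simp add: circ_cj)
  finally show ?thesis using u by simp
qed

lemma bsb: assumes m: "\<And>x y. x \<in> carrier G \<Longrightarrow> y \<in> carrier G \<Longrightarrow> m x y = cc x y"
  shows "bi_skew_brace G (op_struct G m)"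
proof -
  have gr: "group (op_struct G m)" by (rule opg[OF m])
  have c: "carrier (op_struct G m) = carrier G" by (simp add: op_struct_def)
  have mm: "\<And>x y. x \<otimes>\<^bsub>op_struct G m\<^esub> y = m x y" by (simp add: op_struct_def)
  have s1: "\<And>g h k. g \<in> carrier G \<Longrightarrow> h \<in> carrier G \<Longrightarrow> k \<in> carrier G \<Longrightarrow> m g (h \<otimes> k) = m g h \<otimes> inv g \<otimes> m g k"
  proof -
    fix g h k assume a: "g \<in> carrier G" "h \<in> carrier G" "k \<in> carrier G"
    have "m g (h \<otimes> k) = cc g (h \<otimes> k)" using a by (simp add: m)
    also have "\<dots> = cc g h \<otimes> inv g \<otimes> cc g k" using a by (rule sb1core)
    also have "\<dots> = m g h \<otimes> inv g \<otimes> m g k" using a by (simp add: m)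
    finally show "m g (h \<otimes> k) = m g h \<otimes> inv g \<otimes> m g k" .
  qed
  have s2: "\<And>g h k. g \<in> carrier G \<Longrightarrow> h \<in> carrier G \<Longrightarrow> k \<in> carrier G \<Longrightarrow>
      g \<otimes> m h k = m (m (g \<otimes> h) (inv\<^bsub>op_struct G m\<^esub> g)) (g \<otimes> k)"
  proof -
    fix g h k assume a: "g \<in> carrier G" "h \<in> carrier G" "k \<in> carrier G"
    have "g \<otimes> m h k = g \<otimes> cc h k" using a by (simp add: m)
    also have "\<dots> = cc (cc (g \<otimes> h) (gbar f \<beta> g)) (g \<otimes> k)" using a by (rule sb2core)
    also have "\<dots> = m (m (g \<otimes> h) (gbar f \<beta> g)) (g \<otimes> k)" using a by (simp add: m)
    also have "gbar f \<beta> g = inv\<^bsub>op_struct G m\<^esub> g" using opinv[OF m a(1)] by simp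
    finally show "g \<otimes> m h k = m (m (g \<otimes> h) (inv\<^bsub>op_struct G m\<^esub> g)) (g \<otimes> k)" .
  qed
  show ?thesis unfolding bi_skew_brace_def skew_brace_def mm c
    using gr is_group s1 s2 by blast
qed


lemma ab4: "x \<in> carrier G \<Longrightarrow> u \<in> carrier G \<Longrightarrow> w \<in> carrier G \<Longrightarrow> k1 \<in> K \<Longrightarrow> k2 \<in> K \<Longrightarrow> k3 \<in> K \<Longrightarrow> k4 \<in> K \<Longrightarrow>
  x \<otimes> (u \<otimes> (w \<otimes> k1 \<otimes> k2) \<otimes> k3) \<otimes> (k4 \<otimes> inv k1) = x \<otimes> u \<otimes> w \<otimes> (k2 \<otimes> k3 \<otimes> k4)"
proof -
  assume a: "x \<in> carrier G" "u \<in> carrier G" "w \<in> carrier G" "k1 \<in> K" "k2 \<in> K" "k3 \<in> K" "k4 \<in> K"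
  have "k1 \<otimes> k2 \<otimes> k3 \<otimes> (k4 \<otimes> inv k1) = k1 \<otimes> (k2 \<otimes> k3 \<otimes> k4) \<otimes> inv k1"
    using a by (simp add: m_assoc Kcomm Kcomm2)
  also have "\<dots> = k2 \<otimes> k3 \<otimes> k4" using a by (simp add: kcan)
  finally have e: "k1 \<otimes> k2 \<otimes> k3 \<otimes> (k4 \<otimes> inv k1) = k2 \<otimes> k3 \<otimes> k4" .
  have "x \<otimes> (u \<otimes> (w \<otimes> k1 \<otimes> k2) \<otimes> k3) \<otimes> (k4 \<otimes> inv k1) = x \<otimes> u \<otimes> w \<otimes> (k1 \<otimes> k2 \<otimes> k3 \<otimes> (k4 \<otimes> inv k1))"
    using a by (simp add: m_assoc)
  thus ?thesis using e by simp
qed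

lemma betaN_bil: assumes pg: "goodf G K A pp" and ab: "aa \<in> Bbil G K"
  shows "betaN f \<beta> pp aa \<in> Bbil G K"
proof -
  have pA[simp]: "\<And>g. g \<in> carrier G \<Longrightarrow> pp g \<in> A" using pg by simp
  have pK[simp]: "\<And>k. k \<in> K \<Longrightarrow> pp k \<in> K" using pg by simp
  have aK[simp]: "\<And>g h. g \<in> carrier G \<Longrightarrow> h \<in> carrier G \<Longrightarrow> aa g h \<in> K" using bK[OF ab] .
  have azl[simp]: "\<And>k x. k \<in> K \<Longrightarrow> x \<in> carrier G \<Longrightarrow> aa k x = \<one>" using bzl[OF ab] .
  have azr[simp]: "\<And>k x. k \<in> K \<Longrightarrow> x \<in> carrier G \<Longrightarrow> aa x k = \<one>" using bzr[OF ab] .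
  show ?thesis unfolding Bbil_def
  proof (intro CollectI conjI ballI)
    fix g h assume a: "g \<in> carrier G" "h \<in> carrier G"
    show "betaN f \<beta> pp aa g h \<in> K" using a by (simp add: betaN_def)
  next
    fix g h k assume a: "g \<in> carrier G" "h \<in> carrier G" "k \<in> carrier G"
    obtain k0 where k0: "k0 \<in> K" "pp (g \<otimes> h) = k0 \<otimes> (pp g \<otimes> pp h)"
      using rcos_eq[of "pp (g \<otimes> h)" "pp g \<otimes> pp h"] gmod[OF pg] a by auto
    obtain k1 where k1: "k1 \<in> K" "f (h \<otimes> k) = k1 \<otimes> (f h \<otimes> f k)"
      using rcos_eq[of "f (h \<otimes> k)" "f h \<otimes> f k"] fmod a by auto
    have c1: "cm (pp (g \<otimes> h)) (f k) = cm (pp g) (f k) \<otimes> cm (pp h) (f k)"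
      using a k0 by (simp add: cm_l cm_zl)
    have c2: "cm (pp g) (f (h \<otimes> k)) = cm (pp g) (f h) \<otimes> cm (pp g) (f k)"
      using a k1 by (simp add: cm_r cm_zr)
    have b1: "\<beta> (pp (g \<otimes> h)) k = \<beta> (pp g) k \<otimes> \<beta> (pp h) k" using a k0 by (simp add: bl')
    have b2: "\<beta> k (pp (g \<otimes> h)) = \<beta> k (pp g) \<otimes> \<beta> k (pp h)" using a k0 by (simp add: br')
    show "betaN f \<beta> pp aa (g \<otimes> h) k = betaN f \<beta> pp aa g k \<otimes> betaN f \<beta> pp aa h k"
      using a by (simp add: betaN_def c1 b1 b2 bl' bl[OF ab] inv_mult_group m_assoc Kcomm Kcomm2)
    show "betaN f \<beta> pp aa g (h \<otimes> k) = betaN f \<beta> pp aa g h \<otimes> betaN f \<beta> pp aa g k"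
      using a by (simp add: betaN_def c2 br' bl' br[OF ab] inv_mult_group m_assoc Kcomm Kcomm2)
  next
    fix k g assume a: "k \<in> K" "g \<in> carrier G"
    show "betaN f \<beta> pp aa k g = \<one>" using a by (simp add: betaN_def cm_zl)
    show "betaN f \<beta> pp aa g k = \<one>" using a by (simp add: betaN_def cm_zr)
  qed
qed

lemma stepcore: assumes pg: "goodf G K A pp" and ab: "aa \<in> Bbil G K"
  and g: "g \<in> carrier G" and h: "h \<in> carrier G"
  shows "cc (cc (cc (cc g (pp g)) h) (gbar f \<beta> (pp g))) (aa g h) = circ (rN f pp) (betaN f \<beta> pp aa) g h"
proof -
  let ?z = "pp g" let ?a = "aa g h" let ?R = "f g" let ?S = "f (pp g)" let ?T = "f h"
  have zA: "?z \<in> A" using pg g by simp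
  hence zc: "?z \<in> carrier G" by simp
  have aK: "?a \<in> K" using bK[OF ab] g h .
  have re: "cc (cc (cc (cc g ?z) h) (gbar f \<beta> ?z)) ?a = cc g (cc ?z (cc h (cc (gbar f \<beta> ?z) ?a)))"
    using g h zc aK by (simp add: circ_assoc)
  have W1: "cc (gbar f \<beta> ?z) ?a = gbar f \<beta> ?z \<otimes> ?a" using zc aK by (simp add: circ_cj cj_K)
  have W2: "cc h (gbar f \<beta> ?z \<otimes> ?a) = h \<otimes> (cj ?T (cj (inv ?S) (inv ?z)) \<otimes> \<beta> ?z ?z \<otimes> ?a) \<otimes> inv (\<beta> h ?z)"
    using h zc aK by (simp add: circ_cj gbar_def cj_mult cj_K br' bcjr' binvr')
  have cjST: "cj ?S (cj ?T (cj (inv ?S) (inv ?z))) = cj ?T (inv ?z)"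
  proof -
    have "cj ?S (cj ?T (cj (inv ?S) (inv ?z))) = cj ?T (cj ?S (cj (inv ?S) (inv ?z)))"
      using zc h by (intro cj_A) simp_all
    thus ?thesis using zc h by simp
  qed
  have "cc ?z (h \<otimes> (cj ?T (cj (inv ?S) (inv ?z)) \<otimes> \<beta> ?z ?z \<otimes> ?a) \<otimes> inv (\<beta> h ?z))
     = ?z \<otimes> (cj ?S h \<otimes> (cj ?T (inv ?z) \<otimes> \<beta> ?z ?z \<otimes> ?a) \<otimes> inv (\<beta> h ?z)) \<otimes> (\<beta> ?z h \<otimes> inv (\<beta> ?z ?z))"
    using h zc aK by (simp add: circ_cj cj_mult cj_K cjST br' bcjr' binvr')
  also have "\<dots> = ?z \<otimes> cj ?S h \<otimes> cj ?T (inv ?z) \<otimes> (?a \<otimes> inv (\<beta> h ?z) \<otimes> \<beta> ?z h)"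
    using h zc aK by (intro ab4) simp_all
  finally have W3: "cc ?z (h \<otimes> (cj ?T (cj (inv ?S) (inv ?z)) \<otimes> \<beta> ?z ?z \<otimes> ?a) \<otimes> inv (\<beta> h ?z))
     = ?z \<otimes> cj ?S h \<otimes> cj ?T (inv ?z) \<otimes> (?a \<otimes> inv (\<beta> h ?z) \<otimes> \<beta> ?z h)" .
  let ?k = "?a \<otimes> inv (\<beta> h ?z) \<otimes> \<beta> ?z h"
  let ?c0 = "cm ?z ?T"
  have kK: "?k \<in> K" using aK h zc by simp
  have c0K: "?c0 \<in> K" using zA h by simp
  have ct: "cj ?T (inv ?z) = inv ?z \<otimes> ?c0" using zc h by (simp add: cj_def cm_def m_assoc)
  have Wf: "?z \<otimes> cj ?S h \<otimes> cj ?T (inv ?z) \<otimes> ?k = cj ?z (cj ?S h) \<otimes> (?c0 \<otimes> ?k)"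
    using zc h kK c0K by (simp only: ct) (simp add: cj_def m_assoc del: cm_K)
  have "cc g (cj ?z (cj ?S h) \<otimes> (?c0 \<otimes> ?k)) = g \<otimes> (cj ?R (cj ?z (cj ?S h)) \<otimes> (?c0 \<otimes> ?k)) \<otimes> \<beta> g h"
    using g h zc kK c0K aK by (simp add: circ_cj cj_mult cj_K br' bcjr' del: cm_K)
  also have "\<dots> = g \<otimes> cj ?R (cj ?z (cj ?S h)) \<otimes> (\<beta> g h \<otimes> ?a \<otimes> \<beta> ?z h \<otimes> inv (\<beta> h ?z) \<otimes> ?c0)"
  proof -
    have "?c0 \<otimes> ?k \<otimes> \<beta> g h = \<beta> g h \<otimes> ?a \<otimes> \<beta> ?z h \<otimes> inv (\<beta> h ?z) \<otimes> ?c0"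
      using ab5[of ?c0 ?a "inv (\<beta> h ?z)" "\<beta> ?z h" "\<beta> g h"] g h zc aK c0K by (simp add: m_assoc)
    thus ?thesis using g h zc kK c0K aK by (simp add: m_assoc del: cm_K)
  qed
  also have "\<dots> = circ (rN f pp) (betaN f \<beta> pp aa) g h"
    using g h zc aK c0K by (simp add: circ_cj_gen rN_def betaN_def cj_comp del: cm_K)
  finally have fin: "cc g (cj ?z (cj ?S h) \<otimes> (?c0 \<otimes> ?k)) = circ (rN f pp) (betaN f \<beta> pp aa) g h" .
  show ?thesis using re W1 W2 W3 Wf fin by simp
qed
end

lemma (in bsk) main:
  assumes pg: "\<forall>n\<ge>1. goodf G K A (p n)" and ab: "\<forall>n\<ge>1. \<alpha> n \<in> Bbil G K"
    and pl: "\<forall>n\<ge>1. lifting G K A (\<psi> n) (p n)"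
  shows "\<exists>r \<beta>. goodf G K A r \<and> \<beta> \<in> Bbil G K \<and> lifting G K A (xi G K \<psi> n) r \<and>
     (\<forall>g\<in>carrier G. \<forall>h\<in>carrier G. ops G p \<alpha> n g h = circ r \<beta> g h)"
proof (induction n)
  case 0
  have k1: "K #> \<one> = K" using subgroup.rcos_const[OF K_sub is_group] by simp
  have g0: "goodf G K A (\<lambda>_. \<one>)" unfolding goodf_def by simp
  have b0: "(\<lambda>_ _. \<one>) \<in> Bbil G K" unfolding Bbil_def by simp
  have l0: "lifting G K A (xi G K \<psi> 0) (\<lambda>_. \<one>)" unfolding lifting_def by (simp add: k1)
  have o0: "\<forall>g\<in>carrier G. \<forall>h\<in>carrier G. ops G p \<alpha> 0 g h = circ (\<lambda>_. \<one>) (\<lambda>_ _. \<one>) g h"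
    by (simp add: circ_def)
  show ?case using g0 b0 l0 o0 by blast
next
  case (Suc n)
  then obtain r \<beta> where rg: "goodf G K A r" and bb: "\<beta> \<in> Bbil G K"
    and rl: "lifting G K A (xi G K \<psi> n) r"
    and m: "\<forall>g\<in>carrier G. \<forall>h\<in>carrier G. ops G p \<alpha> n g h = circ r \<beta> g h" by blast
  interpret C: bskc G K A r \<beta> by unfold_locales (rule rg, rule bb)
  have m': "\<And>x y. x \<in> carrier G \<Longrightarrow> y \<in> carrier G \<Longrightarrow> ops G p \<alpha> n x y = C.cc x y" using m by simp
  have pgs: "goodf G K A (p (Suc n))" using pg by simp
  have abs: "\<alpha> (Suc n) \<in> Bbil G K" using ab by simp
  have pls: "lifting G K A (\<psi> (Suc n)) (p (Suc n))" using pl by simp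
  show ?case
  proof (intro exI conjI)
    show "goodf G K A (rN r (p (Suc n)))" using rN_good[OF rg pgs] .
    show "betaN r \<beta> (p (Suc n)) (\<alpha> (Suc n)) \<in> Bbil G K" using C.betaN_bil[OF pgs abs] .
    show "lifting G K A (xi G K \<psi> (Suc n)) (rN r (p (Suc n)))" using rN_lift[OF rl pls] .
    show "\<forall>g\<in>carrier G. \<forall>h\<in>carrier G. ops G p \<alpha> (Suc n) g h = circ (rN r (p (Suc n))) (betaN r \<beta> (p (Suc n)) (\<alpha> (Suc n))) g h"
    proof (intro ballI)
      fix g h assume g: "g \<in> carrier G" and h: "h \<in> carrier G"
      have zc: "p (Suc n) g \<in> carrier G" using pgs g by simp
      have aK: "\<alpha> (Suc n) g h \<in> carrier G" using bK[OF abs] g h by simp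
      have "ops G p \<alpha> (Suc n) g h = C.cc (C.cc (C.cc (C.cc g (p (Suc n) g)) h) (gbar r \<beta> (p (Suc n) g))) (\<alpha> (Suc n) g h)"
        using g h zc aK by (simp add: Let_def m' C.opinv[OF m'])
      also have "\<dots> = circ (rN r (p (Suc n))) (betaN r \<beta> (p (Suc n)) (\<alpha> (Suc n))) g h"
        using C.stepcore[OF pgs abs g h] .
      finally show "ops G p \<alpha> (Suc n) g h = circ (rN r (p (Suc n))) (betaN r \<beta> (p (Suc n)) (\<alpha> (Suc n))) g h" .
    qed
  qed
qed

theorem mainTheorem6:
  fixes G :: "'a monoid" and K A :: "'a set"
    and \<psi> :: "nat \<Rightarrow> 'a set \<Rightarrow> 'a set"
    and \<alpha> :: "nat \<Rightarrow> 'a \<Rightarrow> 'a \<Rightarrow> 'a"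
    and p q :: "nat \<Rightarrow> 'a \<Rightarrow> 'a"
  assumes "group G"
    and "subgroup K G"
    and "\<forall>k\<in>K. \<forall>g\<in>carrier G. k \<otimes>\<^bsub>G\<^esub> g = g \<otimes>\<^bsub>G\<^esub> k"
    and "subgroup A G" and "K \<subseteq> A"
    and "comm_group ((G\<lparr>carrier := A\<rparr>) Mod K)"
    and "\<forall>n\<ge>1. \<psi> n \<in> Aend G K A"
    and "\<forall>n\<ge>1. \<alpha> n \<in> Bbil G K"
    and "\<forall>n\<ge>1. lifting G K A (\<psi> n) (p n)"
    and "\<forall>n\<ge>1. lifting G K A (xi G K \<psi> n) (q n)"
  shows "\<forall>n\<ge>1.
     group (op_struct G (ops G p \<alpha> n)) \<and>
     (\<exists>\<beta>\<in>Bbil G K. \<forall>g\<in>carrier G. \<forall>h\<in>carrier G.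
        ops G p \<alpha> n g h =
          g \<otimes>\<^bsub>G\<^esub> q n g \<otimes>\<^bsub>G\<^esub> h \<otimes>\<^bsub>G\<^esub> inv\<^bsub>G\<^esub> (q n g) \<otimes>\<^bsub>G\<^esub> \<beta> g h) \<and>
     bi_skew_brace G (op_struct G (ops G p \<alpha> n))"
proof (intro allI impI)
  fix n :: nat assume n: "n \<ge> 1"
  interpret B: bsk G K A
    unfolding bsk_def bsk_axioms_def using assms(1-6) by blast
  have pg: "\<forall>n\<ge>1. goodf G K A (p n)" using B.good_of_lift assms(7,9) by blast
  obtain r \<beta> where rg: "goodf G K A r" and bb: "\<beta> \<in> Bbil G K"
    and rl: "lifting G K A (xi G K \<psi> n) r"
    and m: "\<forall>g\<in>carrier G. \<forall>h\<in>carrier G. ops G p \<alpha> n g h = B.circ r \<beta> g h"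
    using B.main[OF pg assms(8,9)] by blast
  interpret C: bskc G K A r \<beta> by unfold_locales (rule rg, rule bb)
  have m': "\<And>x y. x \<in> carrier G \<Longrightarrow> y \<in> carrier G \<Longrightarrow> ops G p \<alpha> n x y = C.cc x y" using m by simp
  have ql: "lifting G K A (xi G K \<psi> n) (q n)" using assms(10) n by simp
  have form: "\<forall>g\<in>carrier G. \<forall>h\<in>carrier G.
        ops G p \<alpha> n g h = g \<otimes>\<^bsub>G\<^esub> q n g \<otimes>\<^bsub>G\<^esub> h \<otimes>\<^bsub>G\<^esub> inv\<^bsub>G\<^esub> (q n g) \<otimes>\<^bsub>G\<^esub> \<beta> g h"
  proof (intro ballI)
    fix g h assume g: "g \<in> carrier G" and h: "h \<in> carrier G"
    have qA: "q n g \<in> A" and qe: "K #>\<^bsub>G\<^esub> q n g = xi G K \<psi> n (K #>\<^bsub>G\<^esub> g)" using ql g unfolding lifting_def by blast+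
    have rA: "r g \<in> A" and re: "K #>\<^bsub>G\<^esub> r g = xi G K \<psi> n (K #>\<^bsub>G\<^esub> g)" using rl g unfolding lifting_def by blast+
    have cj: "B.cj (q n g) h = B.cj (r g) h" using qA rA qe re h by (intro B.cj_cong) simp_all
    have "ops G p \<alpha> n g h = g \<otimes>\<^bsub>G\<^esub> B.cj (r g) h \<otimes>\<^bsub>G\<^esub> \<beta> g h" using g h by (simp add: m' C.circ_cj)
    also have "\<dots> = g \<otimes>\<^bsub>G\<^esub> B.cj (q n g) h \<otimes>\<^bsub>G\<^esub> \<beta> g h" by (simp only: cj)
    also have "\<dots> = g \<otimes>\<^bsub>G\<^esub> q n g \<otimes>\<^bsub>G\<^esub> h \<otimes>\<^bsub>G\<^esub> inv\<^bsub>G\<^esub> (q n g) \<otimes>\<^bsub>G\<^esub> \<beta> g h"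
      using g h qA cj by (simp add: B.cj_def B.m_assoc)
    finally show "ops G p \<alpha> n g h = g \<otimes>\<^bsub>G\<^esub> q n g \<otimes>\<^bsub>G\<^esub> h \<otimes>\<^bsub>G\<^esub> inv\<^bsub>G\<^esub> (q n g) \<otimes>\<^bsub>G\<^esub> \<beta> g h" .
  qed
  show "group (op_struct G (ops G p \<alpha> n)) \<and>
     (\<exists>\<beta>\<in>Bbil G K. \<forall>g\<in>carrier G. \<forall>h\<in>carrier G.
        ops G p \<alpha> n g h = g \<otimes>\<^bsub>G\<^esub> q n g \<otimes>\<^bsub>G\<^esub> h \<otimes>\<^bsub>G\<^esub> inv\<^bsub>G\<^esub> (q n g) \<otimes>\<^bsub>G\<^esub> \<beta> g h) \<and>
     bi_skew_brace G (op_struct G (ops G p \<alpha> n))"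
    using C.opg[OF m'] C.bsb[OF m'] form bb by blast
qed

end
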